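(* Let $T\in\mathcal{B}\subseteq B(\mathcal{F})$ be a band-limited operator such that either $[T,R_j^*]\in\mathcal{S}$ for all $1\le j\le d$, or $[T,R_j]\in\mathcal{S}$ for all $1\le j\le d$. Then $T\in\mathcal{C}=C^*(L_1,\ldots,L_d)$.
   Context: $d\ge2$; $\xi_1,\ldots,\xi_d$ is the standard orthonormal basis of $\mathbb{C}^d$. $\mathcal{F}=\bigoplus_{n\ge0}\mathcal{F}_n$ is the full Fock space, $\mathcal{F}_0=\mathbb{C}\Omega$, $\mathcal{F}_n=(\mathbb{C}^d)^{\otimes n}$ with the usual inner product. $L_j,R_j$ are the left and right creation operators: $L_j\eta=\xi_j\otimes\eta$, $R_j\eta=\eta\otimes\xi_j$ (with $L_j\Omega=R_j\Omega=\xi_j$). An operator $T\in B(\mathcal{F})$ is band-limited if there is $b\ge0$ with $T(\mathcal{F}_n)\subseteq\bigoplus_{m\ge0,|m-n|\le b}\mathcal{F}_m$ for all $n$; $\mathcal{B}$ is the set of band-limited operators. A band-limited $T$ is summable if $\sum_{n\ge0}\|T|_{\mathcal{F}_n}\|<\infty$, where $T|_{\mathcal{F}_n}$ is the restriction of $T$ to $\mathcal{F}_n$; $\mathcal{S}$ is the set of summable band-limited operators. *)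

theory Defs
  imports "HOL-Analysis.Analysis"
begin

text \<open>Full Fock space over C^d, realised as l2 over the set of words (lists) with
letters in {0..<d}; the word w corresponds to the basis vector xi_{w1} (x) ... (x) xi_{wn},
the empty word to Omega.  Bounded operators are represented by their matrices
M w v = <T e_v, e_w>, vanishing outside words x words.\<close>

definition words :: "nat \<Rightarrow> nat list set" where
  "words d = {w. \<forall>i\<in>set w. i < d}"

type_synonym mat = "nat list \<Rightarrow> nat list \<Rightarrow> complex"

definition is_mat :: "nat \<Rightarrow> mat \<Rightarrow> bool" where
  "is_mat d M \<longleftrightarrow> (\<forall>w v. (w \<notin> words d \<or> v \<notin> words d) \<longrightarrow> M w v = 0)"

definition op_bound :: "nat \<Rightarrow> mat \<Rightarrow> real \<Rightarrow> bool" where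
  "op_bound d M C \<longleftrightarrow> C \<ge> 0 \<and>
     (\<forall>A B (x :: nat list \<Rightarrow> complex). finite A \<longrightarrow> finite B \<longrightarrow> A \<subseteq> words d \<longrightarrow> B \<subseteq> words d \<longrightarrow>
        (\<Sum>w\<in>B. (cmod (\<Sum>v\<in>A. M w v * x v))\<^sup>2) \<le> C\<^sup>2 * (\<Sum>v\<in>A. (cmod (x v))\<^sup>2))"

definition bounded_op :: "nat \<Rightarrow> mat \<Rightarrow> bool" where
  "bounded_op d M \<longleftrightarrow> is_mat d M \<and> (\<exists>C. op_bound d M C)"

definition opnorm :: "nat \<Rightarrow> mat \<Rightarrow> real" where
  "opnorm d M = Inf {C. op_bound d M C}"

definition mat_mult :: "nat \<Rightarrow> mat \<Rightarrow> mat \<Rightarrow> mat" where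
  "mat_mult d M N = (\<lambda>w v. infsum (\<lambda>u. M w u * N u v) (words d))"

definition adj :: "mat \<Rightarrow> mat" where
  "adj M = (\<lambda>w v. cnj (M v w))"

definition commutator :: "nat \<Rightarrow> mat \<Rightarrow> mat \<Rightarrow> mat" where
  "commutator d M N = (\<lambda>w v. mat_mult d M N w v - mat_mult d N M w v)"

text \<open>Left / right creation operators (letters indexed 0..d-1 instead of 1..d):
L_j e_v = e_(j # v),  R_j e_v = e_(v @ [j]).\<close>
definition Lcr :: "nat \<Rightarrow> nat \<Rightarrow> mat" where
  "Lcr d j = (\<lambda>w v. if v \<in> words d \<and> w = j # v then 1 else 0)"

definition Rcr :: "nat \<Rightarrow> nat \<Rightarrow> mat" where
  "Rcr d j = (\<lambda>w v. if v \<in> words d \<and> w = v @ [j] then 1 else 0)"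

definition band_limited :: "nat \<Rightarrow> mat \<Rightarrow> bool" where
  "band_limited d M \<longleftrightarrow> bounded_op d M \<and>
     (\<exists>b::nat. \<forall>w v. M w v \<noteq> 0 \<longrightarrow> length w \<le> length v + b \<and> length v \<le> length w + b)"

definition restr :: "nat \<Rightarrow> mat \<Rightarrow> mat" where
  "restr n M = (\<lambda>w v. if length v = n then M w v else 0)"

definition summable_op :: "nat \<Rightarrow> mat \<Rightarrow> bool" where
  "summable_op d M \<longleftrightarrow> band_limited d M \<and> summable (\<lambda>n. opnorm d (restr n M))"

inductive_set star_alg_L :: "nat \<Rightarrow> mat set" for d where
  gen: "j < d \<Longrightarrow> Lcr d j \<in> star_alg_L d"
| add: "M \<in> star_alg_L d \<Longrightarrow> N \<in> star_alg_L d \<Longrightarrow> (\<lambda>w v. M w v + N w v) \<in> star_alg_L d"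
| scal: "M \<in> star_alg_L d \<Longrightarrow> (\<lambda>w v. c * M w v) \<in> star_alg_L d"
| mult: "M \<in> star_alg_L d \<Longrightarrow> N \<in> star_alg_L d \<Longrightarrow> mat_mult d M N \<in> star_alg_L d"
| adjoint: "M \<in> star_alg_L d \<Longrightarrow> adj M \<in> star_alg_L d"

definition cstar_L :: "nat \<Rightarrow> mat set" where
  "cstar_L d = {T. bounded_op d T \<and>
     (\<forall>e>0. \<exists>S\<in>star_alg_L d. opnorm d (\<lambda>w v. T w v - S w v) < e)}"

end

theory Submission
  imports Defs
begin

definition app :: "mat \<Rightarrow> (nat list \<Rightarrow> complex) \<Rightarrow> nat list set \<Rightarrow> nat list \<Rightarrow> complex" where
  "app M x A w = (\<Sum>v\<in>A. M w v * x v)"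

definition vnorm :: "(nat list \<Rightarrow> complex) \<Rightarrow> nat list set \<Rightarrow> real" where
  "vnorm x A = L2_set (\<lambda>v. cmod (x v)) A"

definition lvl_bound :: "nat \<Rightarrow> mat \<Rightarrow> nat \<Rightarrow> real \<Rightarrow> bool" where
  "lvl_bound d M n c \<longleftrightarrow> c \<ge> 0 \<and>
     (\<forall>A B x. finite A \<longrightarrow> finite B \<longrightarrow> A \<subseteq> words d \<longrightarrow> B \<subseteq> words d \<longrightarrow> (\<forall>v\<in>A. length v = n) \<longrightarrow>
        vnorm (app M x A) B \<le> c * vnorm x A)"

lemma sqrt_form: assumes "C \<ge> 0" "P \<ge> 0" "Q \<ge> 0"
  shows "(Q \<le> C\<^sup>2 * P) \<longleftrightarrow> sqrt Q \<le> C * sqrt P"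
proof -
  have "C * sqrt P = sqrt (C\<^sup>2 * P)" using assms by (simp add: real_sqrt_mult)
  thus ?thesis using assms by simp
qed

lemma op_bound_L2: "op_bound d M C \<longleftrightarrow> C \<ge> 0 \<and>
     (\<forall>A B x. finite A \<longrightarrow> finite B \<longrightarrow> A \<subseteq> words d \<longrightarrow> B \<subseteq> words d \<longrightarrow>
        vnorm (app M x A) B \<le> C * vnorm x A)"
proof -
  have "\<And>A B x. C \<ge> 0 \<Longrightarrow> ((\<Sum>w\<in>B. (cmod (\<Sum>v\<in>A. M w v * x v))\<^sup>2) \<le> C\<^sup>2 * (\<Sum>v\<in>A. (cmod (x v))\<^sup>2))
     \<longleftrightarrow> vnorm (app M x A) B \<le> C * vnorm x A"
    unfolding vnorm_def app_def L2_set_def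
    by (intro sqrt_form) (simp_all add: sum_nonneg)
  note key = this
  show ?thesis
  proof (cases "C \<ge> 0")
    case True
    show ?thesis unfolding op_bound_def by (simp only: key[OF True] True simp_thms)
  next
    case False then show ?thesis unfolding op_bound_def by simp
  qed
qed

lemma op_bound_lvl: "op_bound d M C \<Longrightarrow> lvl_bound d M n C"
  unfolding op_bound_L2 lvl_bound_def by blast

lemma app_cong: "(\<And>v. v \<in> A \<Longrightarrow> M w v = N w v) \<Longrightarrow> app M x A w = app N x A w"
  unfolding app_def by (rule sum.cong) auto

lemma vnorm_cong: "(\<And>w. w \<in> B \<Longrightarrow> cmod (f w) = cmod (g w)) \<Longrightarrow> vnorm f B = vnorm g B"
  unfolding vnorm_def by (rule L2_set_cong) auto

lemma lvl_bound_cong: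
  assumes "lvl_bound d M n c" "\<And>w v. w \<in> words d \<Longrightarrow> v \<in> words d \<Longrightarrow> length v = n \<Longrightarrow> M w v = N w v"
  shows "lvl_bound d N n c"
  unfolding lvl_bound_def
proof (intro conjI allI impI)
  show "c \<ge> 0" using assms(1) unfolding lvl_bound_def by auto
  fix A B x assume h: "finite A" "finite B" "A \<subseteq> words d" "B \<subseteq> words d" "\<forall>v\<in>A. length v = n"
  have "vnorm (app N x A) B = vnorm (app M x A) B"
  proof (rule vnorm_cong)
    fix w assume "w \<in> B"
    hence "app N x A w = app M x A w" using h by (intro app_cong) (auto simp: subset_iff assms(2))
    thus "cmod (app N x A w) = cmod (app M x A w)" by simp
  qed
  thus "vnorm (app N x A) B \<le> c * vnorm x A" using assms(1) h unfolding lvl_bound_def by auto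
qed

lemma lvl_bound_mono: "lvl_bound d M n c \<Longrightarrow> c \<le> c' \<Longrightarrow> lvl_bound d M n c'"
proof -
  assume a: "lvl_bound d M n c" "c \<le> c'"
  have "\<And>z::real. z \<ge> 0 \<Longrightarrow> c * z \<le> c' * z" using a(2) by (rule mult_right_mono)
  moreover have "\<And>x A. vnorm x A \<ge> 0" unfolding vnorm_def by simp
  ultimately show ?thesis using a unfolding lvl_bound_def by (meson order_trans)
qed

lemma vnorm_add: "vnorm (\<lambda>w. f w + g w) B \<le> vnorm f B + vnorm g B"
proof -
  have "vnorm (\<lambda>w. f w + g w) B \<le> L2_set (\<lambda>w. cmod (f w) + cmod (g w)) B"
    unfolding vnorm_def by (rule L2_set_mono) (auto simp: norm_triangle_ineq)
  also have "\<dots> \<le> vnorm f B + vnorm g B" unfolding vnorm_def by (rule L2_set_triangle_ineq)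
  finally show ?thesis .
qed

lemma vnorm_sum: "finite I \<Longrightarrow> vnorm (\<lambda>w. \<Sum>i\<in>I. f i w) B \<le> (\<Sum>i\<in>I. vnorm (f i) B)"
proof (induction I rule: finite_induct)
  case empty then show ?case by (simp add: vnorm_def L2_set_0')
next
  case (insert a I)
  have "vnorm (\<lambda>w. \<Sum>i\<in>insert a I. f i w) B = vnorm (\<lambda>w. f a w + (\<Sum>i\<in>I. f i w)) B"
    using insert by simp
  also have "\<dots> \<le> vnorm (f a) B + vnorm (\<lambda>w. \<Sum>i\<in>I. f i w) B" by (rule vnorm_add)
  also have "\<dots> \<le> vnorm (f a) B + (\<Sum>i\<in>I. vnorm (f i) B)" using insert by simp
  finally show ?case using insert by simp
qed

lemma vnorm_scal: "vnorm (\<lambda>w. c * f w) B = cmod c * vnorm f B"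
  unfolding vnorm_def by (simp add: norm_mult L2_set_right_distrib)

lemma app_sum: "finite I \<Longrightarrow> app (\<lambda>w v. \<Sum>i\<in>I. M i w v) x A w = (\<Sum>i\<in>I. app (M i) x A w)"
  unfolding app_def sum_distrib_right by (rule sum.swap)

lemma app_scal: "app (\<lambda>w v. c * M w v) x A w = c * app M x A w"
  unfolding app_def by (simp add: sum_distrib_left mult.assoc)

lemma lvl_bound_sum:
  assumes "finite I" "\<And>i. i \<in> I \<Longrightarrow> lvl_bound d (M i) n (c i)"
  shows "lvl_bound d (\<lambda>w v. \<Sum>i\<in>I. M i w v) n (\<Sum>i\<in>I. c i)"
  unfolding lvl_bound_def
proof (intro conjI allI impI)
  show "0 \<le> sum c I" using assms unfolding lvl_bound_def by (simp add: sum_nonneg)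
  fix A B x assume h: "finite A" "finite B" "A \<subseteq> words d" "B \<subseteq> words d" "\<forall>v\<in>A. length v = n"
  have "app (\<lambda>w v. \<Sum>i\<in>I. M i w v) x A = (\<lambda>w. \<Sum>i\<in>I. app (M i) x A w)"
    using assms(1) by (intro ext) (rule app_sum)
  hence "vnorm (app (\<lambda>w v. \<Sum>i\<in>I. M i w v) x A) B = vnorm (\<lambda>w. \<Sum>i\<in>I. app (M i) x A w) B"
    using assms(1) by (metis (no_types) app_sum)
  also have "\<dots> \<le> (\<Sum>i\<in>I. vnorm (app (M i) x A) B)" using assms(1) by (rule vnorm_sum)
  also have "\<dots> \<le> (\<Sum>i\<in>I. c i * vnorm x A)"
    apply (rule sum_mono) using assms(2) h unfolding lvl_bound_def by blast
  finally show "vnorm (app (\<lambda>w v. \<Sum>i\<in>I. M i w v) x A) B \<le> sum c I * vnorm x A"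
    by (simp add: sum_distrib_right)
qed

lemma lvl_bound_scal:
  assumes "lvl_bound d M n c" shows "lvl_bound d (\<lambda>w v. a * M w v) n (cmod a * c)"
  unfolding lvl_bound_def
proof (intro conjI allI impI)
  show "0 \<le> cmod a * c" using assms unfolding lvl_bound_def by simp
  fix A B x assume h: "finite A" "finite B" "A \<subseteq> words d" "B \<subseteq> words d" "\<forall>v\<in>A. length v = n"
  have "app (\<lambda>w v. a * M w v) x A = (\<lambda>w. a * app M x A w)" by (rule ext) (rule app_scal)
  hence "vnorm (app (\<lambda>w v. a * M w v) x A) B = cmod a * vnorm (app M x A) B"
    by (simp add: vnorm_scal)
  also have "\<dots> \<le> cmod a * (c * vnorm x A)"
    using assms h unfolding lvl_bound_def by (simp add: mult_left_mono)
  finally show "vnorm (app (\<lambda>w v. a * M w v) x A) B \<le> cmod a * c * vnorm x A" by simp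
qed

lemma vnorm_nonneg[simp]: "vnorm x A \<ge> 0" unfolding vnorm_def by simp

lemma vnorm_subset: assumes "finite A" "A' \<subseteq> A" shows "vnorm x A' \<le> vnorm x A"
  unfolding vnorm_def L2_set_def
  by (rule real_sqrt_le_mono, rule sum_mono2) (use assms in auto)

lemma vnorm_reindex: assumes "inj_on g A'" shows "vnorm (\<lambda>a. x (g a)) A' = vnorm x (g ` A')"
  unfolding vnorm_def L2_set_def using assms by (simp add: sum.reindex)

lemma vnorm_inj_le: assumes "finite A" "inj_on g A'" "g ` A' \<subseteq> A"
  shows "vnorm (\<lambda>a. x (g a)) A' \<le> vnorm x A"
  using vnorm_reindex[OF assms(2), of x] vnorm_subset[OF assms(1) assms(3)] by simp

lemma op_boundD: "op_bound d M C \<Longrightarrow> finite A \<Longrightarrow> finite B \<Longrightarrow> A \<subseteq> words d \<Longrightarrow> B \<subseteq> words d \<Longrightarrow>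
   vnorm (app M x A) B \<le> C * vnorm x A"
  unfolding op_bound_L2 by blast

lemma lvl_boundD: "lvl_bound d M n C \<Longrightarrow> finite A \<Longrightarrow> finite B \<Longrightarrow> A \<subseteq> words d \<Longrightarrow> B \<subseteq> words d \<Longrightarrow>
   (\<And>v. v \<in> A \<Longrightarrow> length v = n) \<Longrightarrow> vnorm (app M x A) B \<le> C * vnorm x A"
  unfolding lvl_bound_def by blast

lemma op_bound_nonneg: "op_bound d M C \<Longrightarrow> C \<ge> 0" unfolding op_bound_def by simp

lemma opnorm_le: assumes "op_bound d M C" shows "opnorm d M \<le> C"
  unfolding opnorm_def
  by (rule cInf_lower) (use assms op_bound_nonneg in \<open>auto simp: bdd_below_def\<close>)

lemma op_bound_opnorm: assumes "bounded_op d M" shows "op_bound d M (opnorm d M)"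
proof -
  let ?S = "{C. op_bound d M C}"
  have ne: "?S \<noteq> {}" using assms unfolding bounded_op_def by auto
  have nn: "opnorm d M \<ge> 0" unfolding opnorm_def
    by (rule cInf_greatest[OF ne]) (auto dest: op_bound_nonneg)
  show ?thesis unfolding op_bound_L2
  proof (intro conjI allI impI nn)
    fix A B x assume h: "finite A" "finite B" "A \<subseteq> words d" "B \<subseteq> words d"
    have all: "\<And>C. C \<in> ?S \<Longrightarrow> vnorm (app M x A) B \<le> C * vnorm x A"
      using h by (auto intro: op_boundD)
    show "vnorm (app M x A) B \<le> opnorm d M * vnorm x A"
    proof (cases "vnorm x A = 0")
      case True
      from ne obtain C where "C \<in> ?S" by auto
      with all True show ?thesis by force
    next
      case False
      hence pos: "vnorm x A > 0" using vnorm_nonneg[of x A] by linarith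
      have "vnorm (app M x A) B / vnorm x A \<le> opnorm d M" unfolding opnorm_def
      proof (rule cInf_greatest[OF ne])
        fix C assume "C \<in> ?S"
        thus "vnorm (app M x A) B / vnorm x A \<le> C" using all pos by (simp add: divide_le_eq)
      qed
      thus ?thesis using pos by (simp add: divide_le_eq)
    qed
  qed
qed

lemma restr_bounded: assumes "bounded_op d M" shows "bounded_op d (restr n M)"
proof -
  obtain C where C: "op_bound d M C" using assms unfolding bounded_op_def by auto
  have "op_bound d (restr n M) C" unfolding op_bound_L2
  proof (intro conjI allI impI)
    show "C \<ge> 0" using C op_bound_nonneg by auto
    fix A B x assume h: "finite A" "finite B" "A \<subseteq> words d" "B \<subseteq> words d"
    let ?A = "{v\<in>A. length v = n}"
    have "app (restr n M) x A = app M x ?A"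
      unfolding app_def restr_def by (rule ext) (simp add: sum.inter_filter[symmetric] h(1) if_distrib[of "\<lambda>z. z * _"] cong: if_cong)
    hence "vnorm (app (restr n M) x A) B = vnorm (app M x ?A) B" by simp
    also have "\<dots> \<le> C * vnorm x ?A" by (rule op_boundD[OF C]) (use h in auto)
    also have "\<dots> \<le> C * vnorm x A"
      using vnorm_subset[OF h(1), of ?A x] \<open>C \<ge> 0\<close> by (simp add: mult_left_mono)
    finally show "vnorm (app (restr n M) x A) B \<le> C * vnorm x A" .
  qed
  moreover have "is_mat d (restr n M)" using assms unfolding bounded_op_def is_mat_def restr_def by auto
  ultimately show ?thesis unfolding bounded_op_def by auto
qed

lemma lvl_bound_restr: assumes "bounded_op d M" shows "lvl_bound d M n (opnorm d (restr n M))"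
proof -
  have "lvl_bound d (restr n M) n (opnorm d (restr n M))"
    by (rule op_bound_lvl, rule op_bound_opnorm, rule restr_bounded[OF assms])
  thus ?thesis by (rule lvl_bound_cong) (simp add: restr_def)
qed

lemma vnorm_sq: "(vnorm f B)\<^sup>2 = (\<Sum>w\<in>B. (cmod (f w))\<^sup>2)"
  unfolding vnorm_def L2_set_def by (simp add: sum_nonneg)

lemma sum_sq_card: fixes f :: "'a \<Rightarrow> real"
  shows "(\<Sum>i\<in>I. \<bar>f i\<bar>)\<^sup>2 \<le> real (card I) * (\<Sum>i\<in>I. (f i)\<^sup>2)"
proof -
  have "(\<Sum>i\<in>I. \<bar>f i\<bar> * \<bar>(\<lambda>_. 1::real) i\<bar>) \<le> L2_set f I * L2_set (\<lambda>_. 1) I"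
    by (rule L2_set_mult_ineq)
  hence a: "(\<Sum>i\<in>I. \<bar>f i\<bar>) \<le> L2_set f I * sqrt (real (card I))" by (simp add: L2_set_constant)
  have "(\<Sum>i\<in>I. \<bar>f i\<bar>)\<^sup>2 \<le> (L2_set f I * sqrt (real (card I)))\<^sup>2"
    by (rule power_mono[OF a]) (simp add: sum_nonneg)
  also have "\<dots> = (L2_set f I)\<^sup>2 * real (card I)" by (simp add: power_mult_distrib)
  also have "(L2_set f I)\<^sup>2 = (\<Sum>i\<in>I. (f i)\<^sup>2)" unfolding L2_set_def by (simp add: sum_nonneg)
  finally show ?thesis by (simp add: mult.commute)
qed

lemma cmod_sum_sq: "(cmod (\<Sum>i\<in>I. z i))\<^sup>2 \<le> real (card I) * (\<Sum>i\<in>I. (cmod (z i))\<^sup>2)"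
proof -
  have "cmod (\<Sum>i\<in>I. z i) \<le> (\<Sum>i\<in>I. \<bar>cmod (z i)\<bar>)" by (simp add: norm_sum)
  hence "(cmod (\<Sum>i\<in>I. z i))\<^sup>2 \<le> (\<Sum>i\<in>I. \<bar>cmod (z i)\<bar>)\<^sup>2" by (rule power_mono) simp
  also have "\<dots> \<le> real (card I) * (\<Sum>i\<in>I. (cmod (z i))\<^sup>2)" using sum_sq_card[of "\<lambda>i. cmod (z i)" I] by simp
  finally show ?thesis .
qed

lemma lvl_bound_sq:
  assumes "lvl_bound d M n c" "finite A" "finite B" "A \<subseteq> words d" "B \<subseteq> words d" "\<And>v. v \<in> A \<Longrightarrow> length v = n"
  shows "(\<Sum>w\<in>B. (cmod (app M x A w))\<^sup>2) \<le> c\<^sup>2 * (\<Sum>v\<in>A. (cmod (x v))\<^sup>2)"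
proof -
  have "vnorm (app M x A) B \<le> c * vnorm x A" by (rule lvl_boundD[OF assms])
  hence "(vnorm (app M x A) B)\<^sup>2 \<le> (c * vnorm x A)\<^sup>2" by (rule power_mono) simp
  thus ?thesis by (simp add: vnorm_sq power_mult_distrib)
qed

lemma band_op_bound:
  assumes band: "\<And>w v. M w v \<noteq> 0 \<Longrightarrow> length w \<le> length v + b \<and> length v \<le> length w + b"
    and lvl: "\<And>n. lvl_bound d M n c" and c: "c \<ge> 0"
  shows "op_bound d M (sqrt (real (2*b+1)) * c)"
  unfolding op_bound_def
proof (intro conjI allI impI)
  show "sqrt (real (2*b+1)) * c \<ge> 0" using c by simp
  fix A B and x :: "nat list \<Rightarrow> complex"
  assume h: "finite A" "finite B" "A \<subseteq> words d" "B \<subseteq> words d"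
  define L where "L = length ` A"
  define An where "An n = {v\<in>A. length v = n}" for n
  have fL: "finite L" unfolding L_def using h by simp
  have split: "app M x A w = (\<Sum>n\<in>L. app M x (An n) w)" for w
    unfolding app_def An_def L_def by (rule sum.group[symmetric]) (use h in auto)
  define I where "I w = {n\<in>L. n \<le> length w + b \<and> length w \<le> n + b}" for w :: "nat list"
  have split2: "app M x A w = (\<Sum>n\<in>I w. app M x (An n) w)" for w
  proof -
    have "(\<Sum>n\<in>L. app M x (An n) w) = (\<Sum>n\<in>I w. app M x (An n) w)"
    proof (rule sum.mono_neutral_right[OF fL])
      show "I w \<subseteq> L" unfolding I_def by auto
      show "\<forall>n\<in>L - I w. app M x (An n) w = 0"
      proof
        fix n assume "n \<in> L - I w"
        hence "\<not> (n \<le> length w + b \<and> length w \<le> n + b)" unfolding I_def by auto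
        hence "\<And>v. v \<in> An n \<Longrightarrow> M w v = 0" unfolding An_def using band by fastforce
        thus "app M x (An n) w = 0" unfolding app_def by simp
      qed
    qed
    thus ?thesis using split by simp
  qed
  have cardI: "real (card (I w)) \<le> real (2*b+1)" for w
  proof -
    have "I w \<subseteq> {length w - b .. length w + b}" unfolding I_def by auto
    hence "card (I w) \<le> card {length w - b .. length w + b}" by (intro card_mono) auto
    also have "\<dots> \<le> 2*b+1" by simp
    finally show ?thesis by simp
  qed
  have pw: "(cmod (app M x A w))\<^sup>2 \<le> real (2*b+1) * (\<Sum>n\<in>L. (cmod (app M x (An n) w))\<^sup>2)" for w
  proof -
    have "(cmod (app M x A w))\<^sup>2 \<le> real (card (I w)) * (\<Sum>n\<in>I w. (cmod (app M x (An n) w))\<^sup>2)"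
      unfolding split2 by (rule cmod_sum_sq)
    also have "\<dots> \<le> real (2*b+1) * (\<Sum>n\<in>I w. (cmod (app M x (An n) w))\<^sup>2)"
      by (rule mult_right_mono[OF cardI]) (simp add: sum_nonneg)
    also have "(\<Sum>n\<in>I w. (cmod (app M x (An n) w))\<^sup>2) \<le> (\<Sum>n\<in>L. (cmod (app M x (An n) w))\<^sup>2)"
      by (rule sum_mono2[OF fL]) (auto simp: I_def)
    finally show ?thesis by (simp add: mult_left_mono)
  qed
  have "(\<Sum>w\<in>B. (cmod (app M x A w))\<^sup>2) \<le> (\<Sum>w\<in>B. real (2*b+1) * (\<Sum>n\<in>L. (cmod (app M x (An n) w))\<^sup>2))"
    by (rule sum_mono) (rule pw)
  also have "\<dots> = real (2*b+1) * (\<Sum>n\<in>L. \<Sum>w\<in>B. (cmod (app M x (An n) w))\<^sup>2)"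
    by (simp add: sum_distrib_left sum.swap[of _ B L])
  also have "\<dots> \<le> real (2*b+1) * (\<Sum>n\<in>L. c\<^sup>2 * (\<Sum>v\<in>An n. (cmod (x v))\<^sup>2))"
  proof (rule mult_left_mono[OF sum_mono])
    fix n assume "n \<in> L"
    show "(\<Sum>w\<in>B. (cmod (app M x (An n) w))\<^sup>2) \<le> c\<^sup>2 * (\<Sum>v\<in>An n. (cmod (x v))\<^sup>2)"
      by (rule lvl_bound_sq[OF lvl]) (use h in \<open>auto simp: An_def\<close>)
  qed simp
  also have "(\<Sum>n\<in>L. c\<^sup>2 * (\<Sum>v\<in>An n. (cmod (x v))\<^sup>2)) = c\<^sup>2 * (\<Sum>v\<in>A. (cmod (x v))\<^sup>2)"
    unfolding sum_distrib_left[symmetric] An_def L_def by (subst sum.group) (use h in auto)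
  finally show "(\<Sum>w\<in>B. (cmod (\<Sum>v\<in>A. M w v * x v))\<^sup>2) \<le> (sqrt (real (2*b+1)) * c)\<^sup>2 * (\<Sum>v\<in>A. (cmod (x v))\<^sup>2)"
    unfolding app_def by (simp add: power_mult_distrib)
qed

definition tens :: "nat \<Rightarrow> mat \<Rightarrow> mat" where
  "tens m D = (\<lambda>w v. if m \<le> length w \<and> m \<le> length v \<and> drop (length w - m) w = drop (length v - m) v
      then D (take (length w - m) w) (take (length v - m) v) else 0)"

lemma words_append[simp]: "a @ b \<in> words d \<longleftrightarrow> a \<in> words d \<and> b \<in> words d"
  unfolding words_def by auto

lemma words_take: "w \<in> words d \<Longrightarrow> take n w \<in> words d"
  unfolding words_def by (auto dest: in_set_takeD)

lemma words_drop: "w \<in> words d \<Longrightarrow> drop n w \<in> words d"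
  unfolding words_def by (auto dest: in_set_dropD)

lemma lvl_bound_of_sq:
  assumes "c \<ge> 0" "\<And>A B x. finite A \<Longrightarrow> finite B \<Longrightarrow> A \<subseteq> words d \<Longrightarrow> B \<subseteq> words d \<Longrightarrow> (\<And>v. v \<in> A \<Longrightarrow> length v = n) \<Longrightarrow>
     (\<Sum>w\<in>B. (cmod (app M x A w))\<^sup>2) \<le> c\<^sup>2 * (\<Sum>v\<in>A. (cmod (x v))\<^sup>2)"
  shows "lvl_bound d M n c"
  unfolding lvl_bound_def
proof (intro conjI allI impI assms(1))
  fix A B x assume h: "finite A" "finite B" "A \<subseteq> words d" "B \<subseteq> words d" "\<forall>v\<in>A. length v = n"
  have "(\<Sum>w\<in>B. (cmod (app M x A w))\<^sup>2) \<le> c\<^sup>2 * (\<Sum>v\<in>A. (cmod (x v))\<^sup>2)" using h assms(2) by auto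
  thus "vnorm (app M x A) B \<le> c * vnorm x A"
    unfolding vnorm_def L2_set_def by (subst sqrt_form[symmetric]) (auto intro: sum_nonneg assms(1))
qed

lemma lvl_bound_tens:
  assumes D: "lvl_bound d D k c"
  shows "lvl_bound d (tens m D) (k+m) c"
proof (rule lvl_bound_of_sq)
  show c: "c \<ge> 0" using D unfolding lvl_bound_def by simp
  fix A B and x :: "nat list \<Rightarrow> complex"
  assume h: "finite A" "finite B" "A \<subseteq> words d" "B \<subseteq> words d" and len: "\<And>v. v \<in> A \<Longrightarrow> length v = k+m"
  define g where "g w = drop (length w - m) w" for w :: "nat list"
  define tk where "tk w = take (length w - m) w" for w :: "nat list"
  define Asf where "Asf s = {v\<in>A. drop k v = s}" for s
  define A' where "A' s = take k ` Asf s" for s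
  define y where "y s a = x (a @ s)" for s a
  define Bs where "Bs s = {w\<in>B. g w = s}" for s
  define Q where "Q s = (\<Sum>v\<in>Asf s. (cmod (x v))\<^sup>2)" for s
  have fAsf: "finite (Asf s)" for s unfolding Asf_def using h by simp
  have bij: "bij_betw (\<lambda>a. a @ s) (A' s) (Asf s)" if "length s = m" for s
    unfolding bij_betw_def
  proof
    show "inj_on (\<lambda>a. a @ s) (A' s)" by (auto simp: inj_on_def)
    show "(\<lambda>a. a @ s) ` A' s = Asf s"
    proof
      show "(\<lambda>a. a @ s) ` A' s \<subseteq> Asf s" unfolding A'_def Asf_def by auto
      show "Asf s \<subseteq> (\<lambda>a. a @ s) ` A' s"
      proof
        fix v assume v: "v \<in> Asf s"
        hence "v = take k v @ s" unfolding Asf_def by auto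
        thus "v \<in> (\<lambda>a. a @ s) ` A' s" unfolding A'_def using v by (metis image_eqI)
      qed
    qed
  qed
  have appw: "app (tens m D) x A w = app D (y (g w)) (A' (g w)) (tk w)" if "m \<le> length w" for w
  proof -
    have "app (tens m D) x A w = (\<Sum>v\<in>Asf (g w). D (tk w) (take k v) * x v)"
      unfolding app_def Asf_def
      by (rule sum.mono_neutral_cong_right) (use h len that in \<open>auto simp: tens_def g_def tk_def\<close>)
    also have "\<dots> = (\<Sum>a\<in>A' (g w). D (tk w) a * y (g w) a)"
    proof -
      have "length (g w) = m" unfolding g_def using that by simp
      from bij[OF this] show ?thesis unfolding y_def
        by (subst sum.reindex_bij_betw[symmetric, where h="\<lambda>a. a @ g w"]) (auto simp: A'_def Asf_def len intro!: sum.cong)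
    qed
    finally show ?thesis unfolding app_def .
  qed
  have inner: "(\<Sum>w\<in>Bs s. (cmod (app (tens m D) x A w))\<^sup>2) \<le> c\<^sup>2 * Q s" for s
  proof (cases "length s = m")
    case False
    have "\<And>w. w \<in> Bs s \<Longrightarrow> \<not> m \<le> length w" using False unfolding Bs_def g_def by auto
    hence "\<And>w. w \<in> Bs s \<Longrightarrow> app (tens m D) x A w = 0" unfolding app_def tens_def by auto
    hence "(\<Sum>w\<in>Bs s. (cmod (app (tens m D) x A w))\<^sup>2) = 0" by simp
    thus ?thesis unfolding Q_def by (simp add: sum_nonneg)
  next
    case True
    have mw: "\<And>w. w \<in> Bs s \<Longrightarrow> m \<le> length w"
    proof (rule ccontr)
      fix w assume "w \<in> Bs s" "\<not> m \<le> length w"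
      hence "g w = w" "g w = s" unfolding Bs_def g_def by auto
      with True \<open>\<not> m \<le> length w\<close> show False by simp
    qed
    have "(\<Sum>w\<in>Bs s. (cmod (app (tens m D) x A w))\<^sup>2) = (\<Sum>w\<in>Bs s. (cmod (app D (y s) (A' s) (tk w)))\<^sup>2)"
      by (rule sum.cong) (auto simp: appw mw Bs_def)
    also have "\<dots> = (\<Sum>u\<in>tk ` Bs s. (cmod (app D (y s) (A' s) u))\<^sup>2)"
    proof -
      have "inj_on tk (Bs s)"
      proof (rule inj_onI)
        fix w w' assume "w \<in> Bs s" "w' \<in> Bs s" "tk w = tk w'"
        thus "w = w'" unfolding Bs_def tk_def g_def by (metis (mono_tags, lifting) append_take_drop_id mem_Collect_eq)
      qed
      thus ?thesis by (simp add: sum.reindex)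
    qed
    also have "\<dots> \<le> c\<^sup>2 * (\<Sum>a\<in>A' s. (cmod (y s a))\<^sup>2)"
    proof (rule lvl_bound_sq[OF D])
      show "finite (A' s)" unfolding A'_def using fAsf by simp
      show "finite (tk ` Bs s)" unfolding Bs_def using h by simp
      show "A' s \<subseteq> words d" unfolding A'_def Asf_def using h by (auto intro: words_take)
      show "tk ` Bs s \<subseteq> words d" unfolding Bs_def tk_def using h by (auto intro: words_take)
      show "\<And>v. v \<in> A' s \<Longrightarrow> length v = k" unfolding A'_def Asf_def using len by auto
    qed
    also have "(\<Sum>a\<in>A' s. (cmod (y s a))\<^sup>2) = Q s"
      unfolding Q_def y_def by (rule sum.reindex_bij_betw[OF bij[OF True], of "\<lambda>v. (cmod (x v))\<^sup>2"])
    finally show ?thesis .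
  qed
  have "(\<Sum>w\<in>B. (cmod (app (tens m D) x A w))\<^sup>2) = (\<Sum>s\<in>g ` B. \<Sum>w\<in>Bs s. (cmod (app (tens m D) x A w))\<^sup>2)"
    unfolding Bs_def by (rule sum.group[symmetric]) (use h in auto)
  also have "\<dots> \<le> (\<Sum>s\<in>g ` B. c\<^sup>2 * Q s)" by (rule sum_mono) (rule inner)
  also have "\<dots> \<le> (\<Sum>s\<in>g ` B \<union> (\<lambda>v. drop k v) ` A. c\<^sup>2 * Q s)"
    by (rule sum_mono2) (use h in \<open>auto simp: Q_def sum_nonneg\<close>)
  also have "\<dots> = c\<^sup>2 * (\<Sum>v\<in>A. (cmod (x v))\<^sup>2)"
    unfolding sum_distrib_left[symmetric] Q_def Asf_def by (subst sum.group) (use h in auto)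
  finally show "(\<Sum>w\<in>B. (cmod (app (tens m D) x A w))\<^sup>2) \<le> c\<^sup>2 * (\<Sum>v\<in>A. (cmod (x v))\<^sup>2)" .
qed

lemma infsum_one:
  assumes "\<And>t. t \<in> W \<Longrightarrow> t \<noteq> tz \<Longrightarrow> f t = 0"
  shows "infsum f W = (if tz \<in> W then f tz else 0)"
proof -
  have "infsum f W = infsum f (W \<inter> {tz})"
    by (rule infsum_cong_neutral) (use assms in auto)
  also have "\<dots> = (if tz \<in> W then f tz else 0)" by (cases "tz \<in> W") auto
  finally show ?thesis .
qed

lemma infsum_zero': "(\<And>t. t \<in> W \<Longrightarrow> f t = 0) \<Longrightarrow> infsum f W = 0"
  by (simp add: infsum_0)

definition Lw :: "nat \<Rightarrow> nat list \<Rightarrow> mat" where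
  "Lw d u = (\<lambda>w v. if v \<in> words d \<and> w = u @ v then 1 else 0)"

lemma Lw_nil_alg: assumes "d \<ge> 1" shows "Lw d [] \<in> star_alg_L d"
proof -
  have "mat_mult d (adj (Lcr d 0)) (Lcr d 0) = Lw d []"
  proof (intro ext)
    fix w v
    have z: "(0::nat) < d" using assms by simp
    show "mat_mult d (adj (Lcr d 0)) (Lcr d 0) w v = Lw d [] w v"
      unfolding mat_mult_def adj_def Lcr_def Lw_def
      by (subst infsum_one[where tz="0 # w"]) (auto simp: words_def z)
  qed
  moreover have "mat_mult d (adj (Lcr d 0)) (Lcr d 0) \<in> star_alg_L d"
    using assms by (intro star_alg_L.mult star_alg_L.adjoint star_alg_L.gen) auto
  ultimately show ?thesis by simp
qed

lemma Lw_cons: assumes "u \<in> words d" "j < d" shows "mat_mult d (Lcr d j) (Lw d u) = Lw d (j # u)"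
proof (intro ext)
  fix w v
  show "mat_mult d (Lcr d j) (Lw d u) w v = Lw d (j # u) w v"
    unfolding mat_mult_def Lcr_def Lw_def
    by (subst infsum_one[where tz="u @ v"]) (use assms in auto)
qed

lemma Lw_alg: assumes "d \<ge> 1" "u \<in> words d" shows "Lw d u \<in> star_alg_L d"
  using assms(2)
proof (induction u)
  case Nil then show ?case using Lw_nil_alg[OF assms(1)] by simp
next
  case (Cons j u)
  hence "u \<in> words d" "j < d" by (auto simp: words_def)
  with Cons show ?case by (metis Lw_cons star_alg_L.gen star_alg_L.mult)
qed

definition Km :: "nat \<Rightarrow> nat list \<Rightarrow> nat list \<Rightarrow> mat" where
  "Km d u v = (\<lambda>w v'. if \<exists>t\<in>words d. w = u @ t \<and> v' = v @ t then 1 else 0)"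

lemma Km_eq: "mat_mult d (Lw d u) (adj (Lw d v)) = Km d u v"
proof (intro ext)
  fix w v'
  show "mat_mult d (Lw d u) (adj (Lw d v)) w v' = Km d u v w v'"
    unfolding mat_mult_def adj_def Km_def Lw_def
    by (subst infsum_one[where tz="drop (length u) w"]) auto
qed

lemma Km_alg: assumes "d \<ge> 1" "u \<in> words d" "v \<in> words d" shows "Km d u v \<in> star_alg_L d"
  using Km_eq[of d u v] Lw_alg[OF assms(1)] assms
  by (metis star_alg_L.adjoint star_alg_L.mult)

lemma zero_alg: assumes "d \<ge> 1" shows "(\<lambda>w v. 0) \<in> star_alg_L d"
proof -
  have "(\<lambda>w v. 0 * Lcr d 0 w v) \<in> star_alg_L d" using assms by (intro star_alg_L.scal star_alg_L.gen) auto
  thus ?thesis by simp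
qed

lemma sum_alg: assumes "d \<ge> 1" "finite I" "\<And>i. i \<in> I \<Longrightarrow> M i \<in> star_alg_L d"
  shows "(\<lambda>w v. \<Sum>i\<in>I. c i * M i w v) \<in> star_alg_L d"
  using assms(2,3)
proof (induction I rule: finite_induct)
  case empty then show ?case using zero_alg[OF assms(1)] by simp
next
  case (insert a I)
  have "(\<lambda>w v. c a * M a w v + (\<Sum>i\<in>I. c i * M i w v)) \<in> star_alg_L d"
    using insert by (intro star_alg_L.add star_alg_L.scal) auto
  thus ?case using insert by simp
qed

definition Fm :: "nat \<Rightarrow> nat list \<Rightarrow> nat list \<Rightarrow> mat" where
  "Fm d u v = (\<lambda>w v'. Km d u v w v' + (\<Sum>j\<in>{..<d}. (-1) * Km d (u @ [j]) (v @ [j]) w v'))"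

lemma Fm_alg: assumes "d \<ge> 1" "u \<in> words d" "v \<in> words d" shows "Fm d u v \<in> star_alg_L d"
  unfolding Fm_def
  by (intro star_alg_L.add sum_alg Km_alg assms) (use assms in \<open>auto simp: words_def\<close>)

lemma Fm_eval: assumes "u \<in> words d" "v \<in> words d"
  shows "Fm d u v w v' = (if w = u \<and> v' = v then 1 else 0)"
proof -
  have K: "Km d u v w v' = (if w = u \<and> v' = v then 1 else 0) + (\<Sum>j\<in>{..<d}. Km d (u @ [j]) (v @ [j]) w v')"
  proof (cases "\<exists>t\<in>words d. w = u @ t \<and> v' = v @ t")
    case False
    hence "\<And>j. j < d \<Longrightarrow> Km d (u @ [j]) (v @ [j]) w v' = 0" unfolding Km_def
      by (auto simp: words_def)
    moreover have "\<not> (w = u \<and> v' = v)" using False by (force simp: words_def)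
    ultimately show ?thesis using False unfolding Km_def by simp
  next
    case True
    then obtain t where t: "t \<in> words d" "w = u @ t" "v' = v @ t" by auto
    show ?thesis
    proof (cases t)
      case Nil
      hence "\<And>j. Km d (u @ [j]) (v @ [j]) w v' = 0" unfolding Km_def using t by auto
      then show ?thesis using t Nil unfolding Km_def by auto
    next
      case (Cons j0 t')
      have j0: "j0 < d" "t' \<in> words d" using t Cons by (auto simp: words_def)
      have "\<And>j. Km d (u @ [j]) (v @ [j]) w v' = (if j = j0 then 1 else 0)"
        unfolding Km_def using t Cons j0 by auto
      hence "(\<Sum>j\<in>{..<d}. Km d (u @ [j]) (v @ [j]) w v') = 1" using j0 by simp
      moreover have "\<not> (w = u \<and> v' = v)" using t Cons by auto
      ultimately show ?thesis using True unfolding Km_def by simp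
    qed
  qed
  show ?thesis unfolding Fm_def using K by (simp add: sum_negf)
qed

definition WL :: "nat \<Rightarrow> nat \<Rightarrow> nat list set" where
  "WL d n = {u \<in> words d. length u \<le> n}"

lemma finite_WL: "finite (WL d n)"
proof -
  have "WL d n = {xs. set xs \<subseteq> {..<d} \<and> length xs \<le> n}" unfolding WL_def words_def by auto
  thus ?thesis using finite_lists_length_le[of "{..<d}" n] by simp
qed

definition P1 :: "nat \<Rightarrow> nat \<Rightarrow> nat \<Rightarrow> (nat list \<times> nat list) set" where
  "P1 d b N = {(u,v0). u \<in> words d \<and> v0 \<in> words d \<and> length v0 < N \<and> length u \<le> length v0 + b}"

definition P2 :: "nat \<Rightarrow> nat \<Rightarrow> nat \<Rightarrow> (nat list \<times> nat list) set" where
  "P2 d b N = {(u,v0). u \<in> words d \<and> v0 \<in> words d \<and> length v0 = N \<and> length u \<le> N + b}"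

lemma finite_P1: "finite (P1 d b N)"
  by (rule finite_subset[of _ "WL d (N+b) \<times> WL d N"]) (use finite_WL[of d] in \<open>auto simp: P1_def WL_def\<close>)

lemma finite_P2: "finite (P2 d b N)"
  by (rule finite_subset[of _ "WL d (N+b) \<times> WL d N"]) (use finite_WL[of d] in \<open>auto simp: P2_def WL_def\<close>)

definition Sm :: "nat \<Rightarrow> mat \<Rightarrow> nat \<Rightarrow> nat \<Rightarrow> mat" where
  "Sm d T b N = (\<lambda>w v'. (\<Sum>p\<in>P1 d b N. T (fst p) (snd p) * Fm d (fst p) (snd p) w v')
      + (\<Sum>p\<in>P2 d b N. T (fst p) (snd p) * Km d (fst p) (snd p) w v'))"

lemma Sm_alg: assumes "d \<ge> 1" shows "Sm d T b N \<in> star_alg_L d"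
  unfolding Sm_def
  by (intro star_alg_L.add sum_alg Fm_alg Km_alg assms finite_P1 finite_P2) (auto simp: P1_def P2_def)

definition Um :: "mat \<Rightarrow> nat \<Rightarrow> mat" where
  "Um T k = (\<lambda>w v. tens (length v - k) (restr k T) w v)"

definition bandb :: "mat \<Rightarrow> nat \<Rightarrow> bool" where
  "bandb M b \<longleftrightarrow> (\<forall>w v. M w v \<noteq> 0 \<longrightarrow> length w \<le> length v + b \<and> length v \<le> length w + b)"

lemma Km_char:
  assumes "length v0 = N" "w \<in> words d" "v' \<in> words d"
  shows "(\<exists>t\<in>words d. w = u @ t \<and> v' = v0 @ t) \<longleftrightarrow>
    (N \<le> length v' \<and> length v' - N \<le> length w \<and> drop (length w - (length v' - N)) w = drop N v'
     \<and> (u, v0) = (take (length w - (length v' - N)) w, take N v'))"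
proof
  assume "\<exists>t\<in>words d. w = u @ t \<and> v' = v0 @ t"
  then obtain t where t: "w = u @ t" "v' = v0 @ t" by auto
  thus "N \<le> length v' \<and> length v' - N \<le> length w \<and> drop (length w - (length v' - N)) w = drop N v'
     \<and> (u, v0) = (take (length w - (length v' - N)) w, take N v')" using assms(1) by auto
next
  assume h: "N \<le> length v' \<and> length v' - N \<le> length w \<and> drop (length w - (length v' - N)) w = drop N v'
     \<and> (u, v0) = (take (length w - (length v' - N)) w, take N v')"
  show "\<exists>t\<in>words d. w = u @ t \<and> v' = v0 @ t"
  proof (intro bexI conjI)
    show "drop N v' \<in> words d" using assms(3) by (rule words_drop)
    show "w = u @ drop N v'" using h by (metis append_take_drop_id prod.inject)
    show "v' = v0 @ drop N v'" using h by simp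
  qed
qed

lemma Sm_eval:
  assumes mat: "is_mat d T" and band: "bandb T b" and w: "w \<in> words d" and v: "v' \<in> words d"
  shows "Sm d T b N w v' = (if length v' < N then T w v' else Um T N w v')"
proof -
  have part1: "(\<Sum>p\<in>P1 d b N. T (fst p) (snd p) * Fm d (fst p) (snd p) w v') = (if length v' < N then T w v' else 0)"
  proof -
    have "(\<Sum>p\<in>P1 d b N. T (fst p) (snd p) * Fm d (fst p) (snd p) w v') =
          (\<Sum>p\<in>P1 d b N. if p = (w, v') then T (fst p) (snd p) else 0)"
      by (rule sum.cong) (auto simp: Fm_eval P1_def split: if_splits)
    also have "\<dots> = (if (w, v') \<in> P1 d b N then T w v' else 0)" using finite_P1 by simp
    also have "\<dots> = (if length v' < N then T w v' else 0)"
      using band w v unfolding bandb_def P1_def by auto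
    finally show ?thesis .
  qed
  define m where "m = length v' - N"
  define i0 where "i0 = (take (length w - m) w, take N v')"
  define cnd where "cnd = (N \<le> length v' \<and> m \<le> length w \<and> drop (length w - m) w = drop N v')"
  have part2: "(\<Sum>p\<in>P2 d b N. T (fst p) (snd p) * Km d (fst p) (snd p) w v') = (if length v' < N then 0 else Um T N w v')"
  proof -
    have "(\<Sum>p\<in>P2 d b N. T (fst p) (snd p) * Km d (fst p) (snd p) w v') =
          (\<Sum>p\<in>P2 d b N. if p = i0 then (if cnd then T (fst p) (snd p) else 0) else 0)"
    proof (rule sum.cong)
      fix p assume "p \<in> P2 d b N"
      then obtain u v0 where p: "p = (u, v0)" "length v0 = N" unfolding P2_def by auto
      show "T (fst p) (snd p) * Km d (fst p) (snd p) w v' = (if p = i0 then (if cnd then T (fst p) (snd p) else 0) else 0)"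
      proof -
        have e: "(\<exists>t\<in>words d. w = u @ t \<and> v' = v0 @ t) \<longleftrightarrow> ((u,v0) = i0 \<and> cnd)"
          using Km_char[OF p(2) w v, of u] unfolding i0_def cnd_def m_def by blast
        have "Km d u v0 w v' = (if (u,v0) = i0 \<and> cnd then 1 else 0)" unfolding Km_def e by simp
        thus ?thesis unfolding p by (cases i0) auto
      qed
    qed simp
    also have "\<dots> = (if i0 \<in> P2 d b N then (if cnd then T (fst i0) (snd i0) else 0) else 0)"
      using finite_P2 by simp
    also have "\<dots> = (if cnd then T (fst i0) (snd i0) else 0)"
    proof (cases cnd)
      case True
      have "i0 \<notin> P2 d b N \<Longrightarrow> T (fst i0) (snd i0) = 0"
      proof -
        assume "i0 \<notin> P2 d b N"
        moreover have "fst i0 \<in> words d" "snd i0 \<in> words d" "length (snd i0) = N"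
          using True w v unfolding i0_def cnd_def by (auto intro: words_take)
        ultimately have "\<not> length (fst i0) \<le> length (snd i0) + b" unfolding P2_def
          by (auto simp: case_prod_beta)
        thus ?thesis using band unfolding bandb_def by auto
      qed
      then show ?thesis by auto
    qed simp
    also have "\<dots> = (if length v' < N then 0 else Um T N w v')"
      unfolding Um_def tens_def restr_def cnd_def i0_def m_def by auto
    finally show ?thesis .
  qed
  show ?thesis unfolding Sm_def using part1 part2 by simp
qed

lemma cond_step: fixes w v :: "nat list"
  assumes "k < length v" "m = length v - k - 1"
  shows "(m+1 \<le> length w \<and> drop (length w - m - 1) w = drop k v) \<longleftrightarrow>
    (m \<le> length w \<and> drop (length w - m) w = drop (k+1) v \<and> take (length w - m) w \<noteq> [] \<and> last (take (length w - m) w) = last (take (k+1) v))"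
proof
  assume h: "m+1 \<le> length w \<and> drop (length w - m - 1) w = drop k v"
  define i where "i = length w - m - 1"
  have i: "i < length w" "length w - m = Suc i" using h unfolding i_def by auto
  have dw: "drop i w = w ! i # drop (Suc i) w" using i by (simp add: Cons_nth_drop_Suc)
  have dv: "drop k v = v ! k # drop (Suc k) v" using assms by (simp add: Cons_nth_drop_Suc)
  have "w ! i = v ! k" "drop (Suc i) w = drop (Suc k) v" using h dw dv unfolding i_def by auto
  moreover have "last (take (Suc i) w) = w ! i" using i by (simp add: take_Suc_conv_app_nth)
  moreover have "last (take (Suc k) v) = v ! k" using assms by (simp add: take_Suc_conv_app_nth)
  ultimately show "m \<le> length w \<and> drop (length w - m) w = drop (k+1) v \<and> take (length w - m) w \<noteq> [] \<and> last (take (length w - m) w) = last (take (k+1) v)"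
    using i h by auto
next
  assume h: "m \<le> length w \<and> drop (length w - m) w = drop (k+1) v \<and> take (length w - m) w \<noteq> [] \<and> last (take (length w - m) w) = last (take (k+1) v)"
  define i where "i = length w - m - 1"
  have i: "i < length w" "length w - m = Suc i" using h unfolding i_def by auto
  have dw: "drop i w = w ! i # drop (Suc i) w" using i by (simp add: Cons_nth_drop_Suc)
  have dv: "drop k v = v ! k # drop (Suc k) v" using assms by (simp add: Cons_nth_drop_Suc)
  have "last (take (Suc i) w) = w ! i" using i by (simp add: take_Suc_conv_app_nth)
  moreover have "last (take (Suc k) v) = v ! k" using assms by (simp add: take_Suc_conv_app_nth)
  ultimately have "w ! i = v ! k" using h i by simp
  thus "m+1 \<le> length w \<and> drop (length w - m - 1) w = drop k v"
    using h i dw dv unfolding i_def by auto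
qed

definition Dm :: "mat \<Rightarrow> nat \<Rightarrow> mat" where
  "Dm T k = (\<lambda>w v. if length v = k+1 then T w v - (if w \<noteq> [] \<and> last w = last v then T (butlast w) (butlast v) else 0) else 0)"

lemma Um_top: "length v = n \<Longrightarrow> Um T n w v = T w v"
  unfolding Um_def tens_def restr_def by simp

lemma Um_step:
  assumes k: "k < length v"
  shows "Um T (Suc k) w v - Um T k w v = tens (length v - k - 1) (Dm T k) w v"
proof -
  define m where "m = length v - k - 1"
  have m1: "length v - Suc k = m" "length v - k = m + 1" "length v - m = Suc k" "length v - (m+1) = k"
    using k unfolding m_def by auto
  note cs = cond_step[OF k m_def, of w]
  have U1: "Um T (Suc k) w v = (if m \<le> length w \<and> drop (length w - m) w = drop (k+1) v
      then T (take (length w - m) w) (take (Suc k) v) else 0)"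
  proof -
    have "Um T (Suc k) w v = tens m (restr (Suc k) T) w v" unfolding Um_def m1(1) ..
    also have "\<dots> = (if m \<le> length w \<and> m \<le> length v \<and> drop (length w - m) w = drop (Suc k) v
      then restr (Suc k) T (take (length w - m) w) (take (Suc k) v) else 0)" unfolding tens_def m1(3) ..
    also have "\<dots> = (if m \<le> length w \<and> drop (length w - m) w = drop (k+1) v
      then T (take (length w - m) w) (take (Suc k) v) else 0)"
      using k m1(3) unfolding restr_def by (simp only: length_take min_absorb1 Suc_le_eq Suc_eq_plus1 simp_thms if_True) (auto simp del: drop_drop)
    finally show ?thesis .
  qed
  have U0: "Um T k w v = (if m+1 \<le> length w \<and> drop (length w - m - 1) w = drop k v
      then T (take (length w - m - 1) w) (take k v) else 0)"
  proof -
    have "Um T k w v = tens (m+1) (restr k T) w v" unfolding Um_def m1(2) ..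
    also have "\<dots> = (if m+1 \<le> length w \<and> m+1 \<le> length v \<and> drop (length w - (m+1)) w = drop k v
      then restr k T (take (length w - (m+1)) w) (take k v) else 0)" unfolding tens_def m1(4) ..
    also have "\<dots> = (if m+1 \<le> length w \<and> drop (length w - m - 1) w = drop k v
      then T (take (length w - m - 1) w) (take k v) else 0)"
      using k m1(4) unfolding restr_def diff_diff_left by (auto simp del: drop_drop)
    finally show ?thesis .
  qed
  have TD: "tens m (Dm T k) w v = (if m \<le> length w \<and> drop (length w - m) w = drop (k+1) v
      then T (take (length w - m) w) (take (Suc k) v) -
        (if take (length w - m) w \<noteq> [] \<and> last (take (length w - m) w) = last (take (k+1) v)
         then T (butlast (take (length w - m) w)) (butlast (take (Suc k) v)) else 0) else 0)"
  proof -
    have "tens m (Dm T k) w v = (if m \<le> length w \<and> m \<le> length v \<and> drop (length w - m) w = drop (Suc k) v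
      then Dm T k (take (length w - m) w) (take (Suc k) v) else 0)" unfolding tens_def m1(3) ..
    thus ?thesis unfolding Dm_def using k m1(3) by (auto simp del: drop_drop)
  qed
  have bt: "butlast (take (length w - m) w) = take (length w - m - 1) w" "butlast (take (Suc k) v) = take k v"
    using k by (simp_all add: butlast_take)
  show ?thesis unfolding m_def[symmetric] U1 U0 TD bt using cs by auto
qed

lemma tele:
  assumes "N \<le> length v"
  shows "T w v - Um T N w v = (\<Sum>k\<in>{N..<length v}. tens (length v - k - 1) (Dm T k) w v)"
proof -
  have "(\<Sum>k\<in>{N..<length v}. tens (length v - k - 1) (Dm T k) w v) = (\<Sum>k = N..<length v. Um T (Suc k) w v - Um T k w v)"
    by (rule sum.cong) (auto simp: Um_step)
  also have "\<dots> = Um T (length v) w v - Um T N w v" by (rule sum_Suc_diff'[OF assms])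
  finally show ?thesis by (simp add: Um_top)
qed

definition Rin :: "mat \<Rightarrow> nat \<Rightarrow> mat" where
  "Rin M j = (\<lambda>w v. if v \<noteq> [] \<and> last v = j then M w (butlast v) else 0)"

definition Lout :: "mat \<Rightarrow> nat \<Rightarrow> mat" where
  "Lout M j = (\<lambda>w v. if w \<noteq> [] \<and> last w = j then M (butlast w) v else 0)"

lemma words_butlast: "w \<in> words d \<Longrightarrow> butlast w \<in> words d"
  unfolding words_def by (auto dest: in_set_butlastD)

lemma vnorm_if: "finite B \<Longrightarrow> vnorm (\<lambda>w. if P w then g w else 0) B = vnorm g {w\<in>B. P w}"
  unfolding vnorm_def L2_set_def
  by (simp add: if_distrib[of cmod] if_distrib[of "\<lambda>z. z\<^sup>2"] sum.inter_filter[symmetric] cong: if_cong)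

lemma lvl_bound_Rin:
  assumes M: "lvl_bound d M k c" shows "lvl_bound d (Rin M j) (Suc k) c"
  unfolding lvl_bound_def
proof (intro conjI allI impI)
  show "c \<ge> 0" using M unfolding lvl_bound_def by simp
  fix A B x assume h: "finite A" "finite B" "A \<subseteq> words d" "B \<subseteq> words d" "\<forall>v\<in>A. length v = Suc k"
  define Aj where "Aj = {v\<in>A. v \<noteq> [] \<and> last v = j}"
  define A' where "A' = butlast ` Aj"
  have bij: "bij_betw (\<lambda>a. a @ [j]) A' Aj"
    unfolding bij_betw_def A'_def
  proof
    show "inj_on (\<lambda>a. a @ [j]) (butlast ` Aj)" by (auto simp: inj_on_def)
    show "(\<lambda>a. a @ [j]) ` butlast ` Aj = Aj"
    proof
      show "(\<lambda>a. a @ [j]) ` butlast ` Aj \<subseteq> Aj" unfolding Aj_def by (auto simp: append_butlast_last_id)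
      show "Aj \<subseteq> (\<lambda>a. a @ [j]) ` butlast ` Aj"
      proof
        fix v assume v: "v \<in> Aj"
        hence "v = butlast v @ [j]" unfolding Aj_def by (metis (mono_tags, lifting) append_butlast_last_id mem_Collect_eq)
        thus "v \<in> (\<lambda>a. a @ [j]) ` butlast ` Aj" using v by blast
      qed
    qed
  qed
  have eq: "app (Rin M j) x A = app M (\<lambda>a. x (a @ [j])) A'"
  proof
    fix w
    have "app (Rin M j) x A w = (\<Sum>v\<in>Aj. M w (butlast v) * x v)"
      unfolding app_def Rin_def Aj_def using h(1)
      by (simp add: if_distrib[of "\<lambda>z. z * _"] sum.inter_filter[symmetric] cong: if_cong)
    also have "\<dots> = (\<Sum>a\<in>A'. M w a * x (a @ [j]))"
      by (subst sum.reindex_bij_betw[OF bij, symmetric]) simp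
    finally show "app (Rin M j) x A w = app M (\<lambda>a. x (a @ [j])) A' w" unfolding app_def .
  qed
  have "vnorm (app M (\<lambda>a. x (a @ [j])) A') B \<le> c * vnorm (\<lambda>a. x (a @ [j])) A'"
  proof (rule lvl_boundD[OF M])
    show "finite A'" unfolding A'_def Aj_def using h by simp
    show "A' \<subseteq> words d" unfolding A'_def Aj_def using h(3)
      by (auto simp: words_def dest: in_set_butlastD)
    show "\<And>v. v \<in> A' \<Longrightarrow> length v = k" unfolding A'_def Aj_def using h(5) by auto
  qed (use h in auto)
  also have "vnorm (\<lambda>a. x (a @ [j])) A' \<le> vnorm x A"
    by (rule vnorm_inj_le[OF h(1)]) (use bij in \<open>auto simp: bij_betw_def Aj_def\<close>)
  finally show "vnorm (app (Rin M j) x A) B \<le> c * vnorm x A"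
    unfolding eq using \<open>c \<ge> 0\<close> by (meson mult_left_mono order_trans)
qed

lemma lvl_bound_Lout:
  assumes M: "lvl_bound d M n c" shows "lvl_bound d (Lout M j) n c"
  unfolding lvl_bound_def
proof (intro conjI allI impI)
  show "c \<ge> 0" using M unfolding lvl_bound_def by simp
  fix A B x assume h: "finite A" "finite B" "A \<subseteq> words d" "B \<subseteq> words d" "\<forall>v\<in>A. length v = n"
  define Bj where "Bj = {w\<in>B. w \<noteq> [] \<and> last w = j}"
  have eq: "app (Lout M j) x A = (\<lambda>w. if w \<noteq> [] \<and> last w = j then app M x A (butlast w) else 0)"
    unfolding app_def Lout_def by (auto simp: fun_eq_iff)
  have "vnorm (app (Lout M j) x A) B = vnorm (\<lambda>w. app M x A (butlast w)) Bj"
    unfolding eq Bj_def by (rule vnorm_if[OF h(2)])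
  also have "\<dots> = vnorm (app M x A) (butlast ` Bj)"
  proof (rule vnorm_reindex)
    show "inj_on butlast Bj" unfolding Bj_def inj_on_def by (metis (mono_tags, lifting) append_butlast_last_id mem_Collect_eq)
  qed
  also have "\<dots> \<le> c * vnorm x A"
    by (rule lvl_boundD[OF M]) (use h in \<open>auto simp: Bj_def intro: words_butlast\<close>)
  finally show "vnorm (app (Lout M j) x A) B \<le> c * vnorm x A" .
qed

lemma comm_R_eval:
  assumes "w \<in> words d" "a \<in> words d" "j < d"
  shows "commutator d T (Rcr d j) w a = T w (a @ [j]) - (if w \<noteq> [] \<and> last w = j then T (butlast w) a else 0)"
proof -
  have 1: "mat_mult d T (Rcr d j) w a = T w (a @ [j])"
    unfolding mat_mult_def Rcr_def
    by (subst infsum_one[where tz="a @ [j]"]) (use assms in \<open>auto simp: words_def\<close>)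
  have 2: "mat_mult d (Rcr d j) T w a = (if w \<noteq> [] \<and> last w = j then T (butlast w) a else 0)"
  proof (cases "w \<noteq> [] \<and> last w = j")
    case True
    have bw: "butlast w \<in> words d" using assms(1) by (auto simp: words_def dest: in_set_butlastD)
    have "w = butlast w @ [j]" using True by (metis append_butlast_last_id)
    then show ?thesis unfolding mat_mult_def Rcr_def using True bw
      by (subst infsum_one[where tz="butlast w"]) (auto, metis butlast_snoc)
  next
    case False
    then show ?thesis unfolding mat_mult_def Rcr_def by (subst infsum_zero') auto
  qed
  show ?thesis unfolding commutator_def 1 2 ..
qed

lemma comm_Rs_eval:
  assumes "u \<in> words d" "v \<in> words d" "j < d"
  shows "commutator d T (adj (Rcr d j)) u v = (if v \<noteq> [] \<and> last v = j then T u (butlast v) else 0) - T (u @ [j]) v"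
proof -
  have 1: "mat_mult d T (adj (Rcr d j)) u v = (if v \<noteq> [] \<and> last v = j then T u (butlast v) else 0)"
  proof (cases "v \<noteq> [] \<and> last v = j")
    case True
    have bv: "butlast v \<in> words d" using assms(2) by (auto simp: words_def dest: in_set_butlastD)
    have "v = butlast v @ [j]" using True by (metis append_butlast_last_id)
    then show ?thesis unfolding mat_mult_def Rcr_def adj_def using True bv
      by (subst infsum_one[where tz="butlast v"]) (auto, metis butlast_snoc)
  next
    case False
    then show ?thesis unfolding mat_mult_def Rcr_def adj_def by (subst infsum_zero') auto
  qed
  have 2: "mat_mult d (adj (Rcr d j)) T u v = T (u @ [j]) v"
    unfolding mat_mult_def Rcr_def adj_def
    by (subst infsum_one[where tz="u @ [j]"]) (use assms in \<open>auto simp: words_def\<close>)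
  show ?thesis unfolding commutator_def 1 2 ..
qed

lemma last_word: "v \<in> words d \<Longrightarrow> v \<noteq> [] \<Longrightarrow> last v < d"
  unfolding words_def by auto

lemma Dm_R:
  assumes "w \<in> words d" "v \<in> words d" "length v = Suc k"
  shows "Dm T k w v = (\<Sum>j\<in>{..<d}. Rin (commutator d T (Rcr d j)) j w v)"
proof -
  have ne: "v \<noteq> []" using assms by auto
  have bv: "butlast v \<in> words d" using assms(2) by (auto simp: words_def dest: in_set_butlastD)
  have "(\<Sum>j\<in>{..<d}. Rin (commutator d T (Rcr d j)) j w v) =
        (\<Sum>j\<in>{..<d}. if j = last v then commutator d T (Rcr d j) w (butlast v) else 0)"
    by (rule sum.cong) (auto simp: Rin_def ne)
  also have "\<dots> = commutator d T (Rcr d (last v)) w (butlast v)"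
    using last_word[OF assms(2) ne] by simp
  also have "\<dots> = T w v - (if w \<noteq> [] \<and> last w = last v then T (butlast w) (butlast v) else 0)"
    using comm_R_eval[OF assms(1) bv last_word[OF assms(2) ne], of T] ne by (simp add: append_butlast_last_id)
  finally show ?thesis unfolding Dm_def using assms(3) by simp
qed

lemma Dm_Rs:
  assumes "w \<in> words d" "v \<in> words d" "length v = Suc k" "bandb T b" "b < Suc k"
  shows "Dm T k w v = (\<Sum>j\<in>{..<d}. (-1) * Lout (commutator d T (adj (Rcr d j))) j w v)"
proof (cases "w = []")
  case True
  have "T w v = 0" using assms True unfolding bandb_def by fastforce
  then show ?thesis unfolding Dm_def Lout_def using True assms(3) by simp
next
  case False
  have bw: "butlast w \<in> words d" using assms(1) by (auto simp: words_def dest: in_set_butlastD)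
  have "(\<Sum>j\<in>{..<d}. (-1) * Lout (commutator d T (adj (Rcr d j))) j w v) =
        (\<Sum>j\<in>{..<d}. if j = last w then - commutator d T (adj (Rcr d j)) (butlast w) v else 0)"
    by (rule sum.cong) (auto simp: Lout_def False)
  also have "\<dots> = - commutator d T (adj (Rcr d (last w))) (butlast w) v"
    using last_word[OF assms(1) False] by simp
  also have "\<dots> = T w v - (if w \<noteq> [] \<and> last w = last v then T (butlast w) (butlast v) else 0)"
    using comm_Rs_eval[OF bw assms(2) last_word[OF assms(1) False], of T] False assms(3)
    by (cases v rule: rev_cases, auto simp: append_butlast_last_id)
  finally show ?thesis unfolding Dm_def using assms(3) by simp
qed

lemma op_bound_cong:
  assumes "op_bound d M C" "\<And>w v. w \<in> words d \<Longrightarrow> v \<in> words d \<Longrightarrow> M w v = N w v"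
  shows "op_bound d N C"
proof -
  have "vnorm (app N x A) B = vnorm (app M x A) B" if "A \<subseteq> words d" "B \<subseteq> words d" for A B x
  proof (rule vnorm_cong)
    fix w assume "w \<in> B"
    hence "app N x A w = app M x A w" using that by (intro app_cong) (auto simp: assms(2) subset_iff)
    thus "cmod (app N x A w) = cmod (app M x A w)" by simp
  qed
  thus ?thesis using assms(1) unfolding op_bound_L2 by simp
qed

lemma opnorm_nonneg: "bounded_op d M \<Longrightarrow> opnorm d M \<ge> 0"
  using op_bound_nonneg op_bound_opnorm by blast

lemma main_approx:
  assumes d: "d \<ge> 1" and Tb: "bounded_op d T" and band: "bandb T b"
    and cs: "summable c" and cnn: "\<And>k. c k \<ge> 0"
    and lv: "\<And>k. k \<ge> N0 \<Longrightarrow> lvl_bound d (Dm T k) (Suc k) (c k)"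
  shows "T \<in> cstar_L d"
  unfolding cstar_L_def
proof (intro CollectI conjI Tb allI impI)
  fix e :: real assume e: "e > 0"
  define K where "K = sqrt (real (2*b+1))"
  have K: "K \<ge> 1" unfolding K_def by simp
  obtain N' where N': "\<And>n. n \<ge> N' \<Longrightarrow> norm (\<Sum>i. c (i + n)) < e / K"
    using suminf_exist_split[OF _ cs, of "e / K"] e K by auto
  define N where "N = max N0 N'"
  define \<delta> where "\<delta> = (\<Sum>i. c (i + N))"
  have cs': "summable (\<lambda>i. c (i + N))" by (rule summable_ignore_initial_segment[OF cs])
  have \<delta>0: "\<delta> \<ge> 0" unfolding \<delta>_def by (rule suminf_nonneg[OF cs']) (rule cnn)
  have \<delta>e: "\<delta> < e / K" using N'[of N] \<delta>0 unfolding \<delta>_def N_def by auto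
  define S where "S = Sm d T b N"
  have Salg: "S \<in> star_alg_L d" unfolding S_def by (rule Sm_alg[OF d])
  define Dmat where "Dmat = (\<lambda>w v. T w v - S w v)"
  have mat: "is_mat d T" using Tb unfolding bounded_op_def by simp
  have Seval: "\<And>w v. w \<in> words d \<Longrightarrow> v \<in> words d \<Longrightarrow> S w v = (if length v < N then T w v else Um T N w v)"
    unfolding S_def by (rule Sm_eval[OF mat band])
  define M' where "M' = (\<lambda>w v. if w \<in> words d \<and> v \<in> words d then Dmat w v else 0)"
  have lvl: "lvl_bound d M' n \<delta>" for n
  proof -
    define Mn where "Mn = (\<lambda>w v. \<Sum>k\<in>{N..<n}. tens (n - k - 1) (Dm T k) w v)"
    have "lvl_bound d Mn n (\<Sum>k\<in>{N..<n}. c k)" unfolding Mn_def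
    proof (rule lvl_bound_sum)
      fix k assume k: "k \<in> {N..<n}"
      have "lvl_bound d (tens (n - k - 1) (Dm T k)) (Suc k + (n - k - 1)) (c k)"
        by (rule lvl_bound_tens, rule lv) (use k in \<open>auto simp: N_def\<close>)
      moreover have "Suc k + (n - k - 1) = n" using k by auto
      ultimately show "lvl_bound d (tens (n - k - 1) (Dm T k)) n (c k)" by simp
    qed simp
    moreover have "(\<Sum>k\<in>{N..<n}. c k) \<le> \<delta>"
    proof (cases "N \<le> n")
      case True
      have "(\<Sum>k\<in>{N..<n}. c k) = (\<Sum>i\<in>{..<n-N}. c (i + N))"
        using sum.shift_bounds_nat_ivl[of c 0 N "n-N"] True by (simp add: atLeast0LessThan)
      also have "\<dots> \<le> \<delta>" unfolding \<delta>_def by (rule sum_le_suminf[OF cs']) (auto simp: cnn)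
      finally show ?thesis .
    next
      case False then show ?thesis using \<delta>0 by simp
    qed
    ultimately have "lvl_bound d Mn n \<delta>" by (rule lvl_bound_mono)
    thus ?thesis
    proof (rule lvl_bound_cong)
      fix w v assume w: "w \<in> words d" and v: "v \<in> words d" and lv: "length v = n"
      show "Mn w v = M' w v"
      proof (cases "n < N")
        case True
        then show ?thesis unfolding Mn_def M'_def Dmat_def using w v lv Seval[OF w v] by simp
      next
        case False
        have "M' w v = T w v - Um T N w v" unfolding M'_def Dmat_def using w v lv Seval[OF w v] False by simp
        also have "\<dots> = Mn w v" unfolding Mn_def using tele[of N v T w] False lv by simp
        finally show ?thesis by simp
      qed
    qed
  qed
  have bandM: "M' w v \<noteq> 0 \<Longrightarrow> length w \<le> length v + b \<and> length v \<le> length w + b" for w v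
  proof -
    assume nz: "M' w v \<noteq> 0"
    hence w: "w \<in> words d" and v: "v \<in> words d" and nz2: "T w v - S w v \<noteq> 0"
      unfolding M'_def Dmat_def by (auto split: if_splits)
    show ?thesis
    proof (cases "length v < N")
      case True then show ?thesis using nz2 Seval[OF w v] by simp
    next
      case False
      hence nz3: "T w v \<noteq> 0 \<or> Um T N w v \<noteq> 0" using nz2 Seval[OF w v] by auto
      thus ?thesis
      proof
        assume "T w v \<noteq> 0" thus ?thesis using band unfolding bandb_def by auto
      next
        assume u: "Um T N w v \<noteq> 0"
        define m where "m = length v - N"
        have c1: "m \<le> length w" and t: "T (take (length w - m) w) (take N v) \<noteq> 0"
          using u False unfolding Um_def tens_def restr_def m_def by (auto split: if_splits)
        have "length (take (length w - m) w) \<le> length (take N v) + b \<and> length (take N v) \<le> length (take (length w - m) w) + b"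
          using band t unfolding bandb_def by blast
        thus ?thesis using False c1 unfolding m_def by auto
      qed
    qed
  qed
  have "op_bound d M' (K * \<delta>)" unfolding K_def by (rule band_op_bound[OF bandM lvl \<delta>0])
  hence ob: "op_bound d Dmat (K * \<delta>)" by (rule op_bound_cong) (simp add: M'_def)
  have "opnorm d Dmat \<le> K * \<delta>" by (rule opnorm_le[OF ob])
  also have "K * \<delta> < e" using \<delta>e K by (simp add: pos_less_divide_eq mult.commute)
  finally have "opnorm d (\<lambda>w v. T w v - S w v) < e" unfolding Dmat_def .
  thus "\<exists>S\<in>star_alg_L d. opnorm d (\<lambda>w v. T w v - S w v) < e" using Salg by blast
qed

theorem theorem3p8:
  fixes d :: nat and T :: mat
  assumes "d \<ge> 2"
    and "band_limited d T"
    and "(\<forall>j<d. summable_op d (commutator d T (adj (Rcr d j))))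
         \<or> (\<forall>j<d. summable_op d (commutator d T (Rcr d j)))"
  shows "T \<in> cstar_L d"
proof -
  have d: "d \<ge> 1" using assms(1) by simp
  have Tb: "bounded_op d T" using assms(2) unfolding band_limited_def by simp
  obtain b where band: "bandb T b" using assms(2) unfolding band_limited_def bandb_def by blast
  show ?thesis
    using assms(3)
  proof
    assume H: "\<forall>j<d. summable_op d (commutator d T (adj (Rcr d j)))"
    define G where "G j = commutator d T (adj (Rcr d j))" for j
    have Gb: "bounded_op d (G j)" if "j < d" for j
      using H that unfolding G_def summable_op_def band_limited_def by simp
    have Gs: "summable (\<lambda>n. opnorm d (restr n (G j)))" if "j < d" for j
      using H that unfolding G_def summable_op_def by simp
    define c where "c k = (\<Sum>j\<in>{..<d}. opnorm d (restr (Suc k) (G j)))" for k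
    show ?thesis
    proof (rule main_approx[OF d Tb band])
      show "summable c" unfolding c_def
      proof (rule summable_sum)
        fix j assume "j \<in> {..<d}"
        hence "summable (\<lambda>n. opnorm d (restr (n + 1) (G j)))"
          by (intro summable_ignore_initial_segment Gs) simp
        thus "summable (\<lambda>k. opnorm d (restr (Suc k) (G j)))" by simp
      qed
      show "\<And>k. c k \<ge> 0" unfolding c_def by (intro sum_nonneg opnorm_nonneg restr_bounded Gb) simp
      fix k assume k: "k \<ge> b"
      have "lvl_bound d (\<lambda>w v. \<Sum>j\<in>{..<d}. (-1) * Lout (G j) j w v) (Suc k) (\<Sum>j\<in>{..<d}. cmod (-1) * opnorm d (restr (Suc k) (G j)))"
        by (intro lvl_bound_sum lvl_bound_scal lvl_bound_Lout lvl_bound_restr Gb) auto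
      hence "lvl_bound d (\<lambda>w v. \<Sum>j\<in>{..<d}. (-1) * Lout (G j) j w v) (Suc k) (c k)" unfolding c_def by simp
      thus "lvl_bound d (Dm T k) (Suc k) (c k)"
        by (rule lvl_bound_cong) (use Dm_Rs[OF _ _ _ band] k in \<open>auto simp: G_def\<close>)
    qed
  next
    assume H: "\<forall>j<d. summable_op d (commutator d T (Rcr d j))"
    define C where "C j = commutator d T (Rcr d j)" for j
    have Cb: "bounded_op d (C j)" if "j < d" for j
      using H that unfolding C_def summable_op_def band_limited_def by simp
    have Cs: "summable (\<lambda>n. opnorm d (restr n (C j)))" if "j < d" for j
      using H that unfolding C_def summable_op_def by simp
    define c where "c k = (\<Sum>j\<in>{..<d}. opnorm d (restr k (C j)))" for k
    show ?thesis
    proof (rule main_approx[OF d Tb band])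
      show "summable c" unfolding c_def by (rule summable_sum) (use Cs in auto)
      show "\<And>k. c k \<ge> 0" unfolding c_def by (intro sum_nonneg opnorm_nonneg restr_bounded Cb) simp
      fix k :: nat assume k: "k \<ge> 0"
      have "lvl_bound d (\<lambda>w v. \<Sum>j\<in>{..<d}. Rin (C j) j w v) (Suc k) (c k)"
        unfolding c_def by (intro lvl_bound_sum lvl_bound_Rin lvl_bound_restr Cb) auto
      thus "lvl_bound d (Dm T k) (Suc k) (c k)"
        by (rule lvl_bound_cong) (use Dm_R in \<open>auto simp: C_def\<close>)
    qed
  qed
qed

end
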